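(* Let $(A,B)$ be controllable, $Q,R$ positive definite, $\theta\in\mathbb R^n$, and let $P^e$ be the unique positive definite solution of the DARE $P^e=Q+A^\top(P^e-P^eB(B^\top P^eB+R)^{-1}B^\top P^e)A$. Set $M^e=P^e-P^eB(R+B^\top P^eB)^{-1}B^\top P^e$, $H^e=M^e-M^eA(Q+A^\top M^eA)^{-1}A^\top M^e$, $K^e=(R+B^\top P^eB)^{-1}B^\top P^eA$, $K'=(R+B^\top P^eB)^{-1}B^\top P^e$, $\alpha^e=(I-(A-BK^e)^\top)^{-1}Q\theta$ (so $\alpha^e=Q\theta+(A-BK^e)^\top\alpha^e$), and $\beta^e=(P^e)^{-1}\alpha^e=F\theta$ with $F=(P^e)^{-1}(I-(A-BK^e)^\top)^{-1}Q$. Then: (i) for every initial state $x_0$, the optimal average cost $\lambda^e=\lim_{N\to\infty}\frac1N\min\sum_{t=0}^{N-1}\big[\frac12(x_t-\theta)^\top Q(x_t-\theta)+\frac12u_t^\top Ru_t\big]$ (minimum over $x_{t+1}=Ax_t+Bu_t$) exists, does not depend on $x_0$, and equals $\frac12(A\theta-\beta^e)^\top H^e(A\theta-\beta^e)$; (ii) $h^e(x)=\frac12(x-\beta^e)^\top P^e(x-\beta^e)$ satisfies the Bellman equation $h^e(x)+\lambda^e=\min_u\big(\frac12(x-\theta)^\top Q(x-\theta)+\frac12u^\top Ru+h^e(Ax+Bu)\big)$ for all $x$; (iii) the stationary controller $u=-K^ex+K'\beta^e$ attains long-run average cost at most $\lambda^e$, hence is optimal.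
   Context: Here $I-(A-BK^e)^\top$ is invertible since $A-BK^e$ is Schur stable (all eigenvalues in the open unit disk). Matrix inequalities/positive definiteness are in the Loewner sense. *)

theory Defs
  imports "HOL-Analysis.Analysis"
begin

definition pos_def_mat :: "real^'n^'n \<Rightarrow> bool" where
  "pos_def_mat M \<longleftrightarrow> transpose M = M \<and> (\<forall>x. x \<noteq> 0 \<longrightarrow> x \<bullet> (M *v x) > 0)"

text \<open>Controllability of (A,B): the controllability matrix [B, AB, ..., A^(n-1)B]
  has full row rank n, i.e. its column space is all of R^n.\<close>
definition controllable :: "real^'n^'n \<Rightarrow> real^'m^'n \<Rightarrow> bool" where
  "controllable A B \<longleftrightarrow>
     span {((\<lambda>v. A *v v) ^^ k) (B *v u) | k u. k < CARD('n)} = UNIV"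

fun traj :: "real^'n^'n \<Rightarrow> real^'m^'n \<Rightarrow> real^'n \<Rightarrow> (nat \<Rightarrow> real^'m) \<Rightarrow> nat \<Rightarrow> real^'n" where
  "traj A B x0 u 0 = x0"
| "traj A B x0 u (Suc t) = A *v traj A B x0 u t + B *v u t"

definition stage_cost :: "real^'n^'n \<Rightarrow> real^'m^'m \<Rightarrow> real^'n \<Rightarrow> real^'n \<Rightarrow> real^'m \<Rightarrow> real" where
  "stage_cost Q R \<theta> x u = (1/2) * ((x - \<theta>) \<bullet> (Q *v (x - \<theta>))) + (1/2) * (u \<bullet> (R *v u))"

definition cost_N :: "real^'n^'n \<Rightarrow> real^'m^'n \<Rightarrow> real^'n^'n \<Rightarrow> real^'m^'m \<Rightarrow> real^'n
    \<Rightarrow> nat \<Rightarrow> real^'n \<Rightarrow> (nat \<Rightarrow> real^'m) \<Rightarrow> real" where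
  "cost_N A B Q R \<theta> N x0 u = (\<Sum>t<N. stage_cost Q R \<theta> (traj A B x0 u t) (u t))"

definition opt_cost_N :: "real^'n^'n \<Rightarrow> real^'m^'n \<Rightarrow> real^'n^'n \<Rightarrow> real^'m^'m \<Rightarrow> real^'n
    \<Rightarrow> nat \<Rightarrow> real^'n \<Rightarrow> real" where
  "opt_cost_N A B Q R \<theta> N x0 = (INF u. cost_N A B Q R \<theta> N x0 u)"

fun cl_traj :: "real^'n^'n \<Rightarrow> real^'m^'n \<Rightarrow> real^'n^'m \<Rightarrow> real^'m \<Rightarrow> real^'n \<Rightarrow> nat \<Rightarrow> real^'n" where
  "cl_traj A B K k0 x0 0 = x0"
| "cl_traj A B K k0 x0 (Suc t) =
     A *v cl_traj A B K k0 x0 t + B *v (k0 - K *v cl_traj A B K k0 x0 t)"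


definition M_e :: "real^'m^'n \<Rightarrow> real^'m^'m \<Rightarrow> real^'n^'n \<Rightarrow> real^'n^'n" where
  "M_e B R P = P - P ** B ** matrix_inv (R + transpose B ** P ** B) ** transpose B ** P"

definition H_e :: "real^'n^'n \<Rightarrow> real^'m^'n \<Rightarrow> real^'n^'n \<Rightarrow> real^'m^'m \<Rightarrow> real^'n^'n \<Rightarrow> real^'n^'n" where
  "H_e A B Q R P = M_e B R P - M_e B R P ** A ** matrix_inv (Q + transpose A ** M_e B R P ** A)
                      ** transpose A ** M_e B R P"

definition K_e :: "real^'n^'n \<Rightarrow> real^'m^'n \<Rightarrow> real^'m^'m \<Rightarrow> real^'n^'n \<Rightarrow> real^'n^'m" where
  "K_e A B R P = matrix_inv (R + transpose B ** P ** B) ** transpose B ** P ** A"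

definition K'_e :: "real^'m^'n \<Rightarrow> real^'m^'m \<Rightarrow> real^'n^'n \<Rightarrow> real^'n^'m" where
  "K'_e B R P = matrix_inv (R + transpose B ** P ** B) ** transpose B ** P"

definition alpha_e :: "real^'n^'n \<Rightarrow> real^'m^'n \<Rightarrow> real^'n^'n \<Rightarrow> real^'m^'m \<Rightarrow> real^'n^'n \<Rightarrow> real^'n \<Rightarrow> real^'n" where
  "alpha_e A B Q R P \<theta> = matrix_inv (mat 1 - transpose (A - B ** K_e A B R P)) *v (Q *v \<theta>)"

definition beta_e :: "real^'n^'n \<Rightarrow> real^'m^'n \<Rightarrow> real^'n^'n \<Rightarrow> real^'m^'m \<Rightarrow> real^'n^'n \<Rightarrow> real^'n \<Rightarrow> real^'n" where
  "beta_e A B Q R P \<theta> = matrix_inv P *v alpha_e A B Q R P \<theta>"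

definition lambda_e :: "real^'n^'n \<Rightarrow> real^'m^'n \<Rightarrow> real^'n^'n \<Rightarrow> real^'m^'m \<Rightarrow> real^'n^'n \<Rightarrow> real^'n \<Rightarrow> real" where
  "lambda_e A B Q R P \<theta> = (1/2) * ((A *v \<theta> - beta_e A B Q R P \<theta>)
        \<bullet> (H_e A B Q R P *v (A *v \<theta> - beta_e A B Q R P \<theta>)))"

definition h_e :: "real^'n^'n \<Rightarrow> real^'m^'n \<Rightarrow> real^'n^'n \<Rightarrow> real^'m^'m \<Rightarrow> real^'n^'n \<Rightarrow> real^'n \<Rightarrow> real^'n \<Rightarrow> real" where
  "h_e A B Q R P \<theta> x = (1/2) * ((x - beta_e A B Q R P \<theta>) \<bullet> (P *v (x - beta_e A B Q R P \<theta>)))"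

end

theory Submission
  imports Defs
begin


lemma inner_transpose: fixes M :: "real^'n^'m"
  shows "x \<bullet> (M *v y) = (transpose M *v x) \<bullet> y"
  by (simp add: dot_lmul_matrix)

lemma pd_sym: assumes "pos_def_mat M" shows "x \<bullet> (M *v y) = y \<bullet> (M *v x)"
proof -
  have "transpose M = M" using assms unfolding pos_def_mat_def by blast
  hence "x \<bullet> (M *v y) = (M *v x) \<bullet> y" by (metis inner_transpose)
  thus ?thesis by (simp add: inner_commute)
qed

lemma pd_nonneg: assumes "pos_def_mat M" shows "0 \<le> x \<bullet> (M *v x)"
  using assms unfolding pos_def_mat_def
  by (cases "x = 0") (auto intro: less_imp_le)

lemma inv_mat: fixes A :: "real^'n^'n"
  assumes "\<And>x. A *v x = 0 \<Longrightarrow> x = 0"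
  shows "A *v (matrix_inv A *v v) = v" "matrix_inv A *v (A *v v) = v"
proof -
  have "\<exists>B. B ** A = mat 1" using matrix_left_invertible_ker assms by blast
  hence "invertible A" by (simp add: invertible_left_inverse)
  hence "A ** matrix_inv A = mat 1 \<and> matrix_inv A ** A = mat 1"
    unfolding matrix_inv_def invertible_def by (rule someI_ex)
  thus "A *v (matrix_inv A *v v) = v" "matrix_inv A *v (A *v v) = v"
    by (metis matrix_vector_mul_assoc matrix_vector_mul_lid)+
qed

lemma inv_mat2: fixes A :: "real^'n^'n"
  assumes "invertible A"
  shows "A *v (matrix_inv A *v v) = v" "matrix_inv A *v (A *v v) = v"
proof -
  have "A ** matrix_inv A = mat 1 \<and> matrix_inv A ** A = mat 1"
    using assms unfolding matrix_inv_def invertible_def by (rule someI_ex)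
  thus "A *v (matrix_inv A *v v) = v" "matrix_inv A *v (A *v v) = v"
    by (metis matrix_vector_mul_assoc matrix_vector_mul_lid)+
qed

lemma mv_neg: fixes M :: "real^'n^'m" shows "M *v (- w) = - (M *v w)"
  by (metis diff_0 matrix_vector_mult_0_right matrix_vector_mult_diff_distrib)

lemma vec_eq_by_inner: fixes a b :: "'a::real_inner"
  assumes "\<And>v. a \<bullet> v = b \<bullet> v" shows "a = b"
proof -
  have "(a - b) \<bullet> (a - b) = 0" using assms[of "a-b"] by (simp add: inner_diff_left)
  thus ?thesis by simp
qed

lemma quad_diff: fixes S :: "real^'n^'n"
  assumes "\<And>a b. a \<bullet> (S *v b) = b \<bullet> (S *v a)"
  shows "(x - y) \<bullet> (S *v (x - y)) = x \<bullet> (S *v x) - 2 * (x \<bullet> (S *v y)) + y \<bullet> (S *v y)"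
  using assms[of y x] by (simp add: matrix_vector_mult_diff_distrib inner_diff_left inner_diff_right)

lemma quad_add: fixes S :: "real^'n^'n"
  assumes "\<And>a b. a \<bullet> (S *v b) = b \<bullet> (S *v a)"
  shows "(x + y) \<bullet> (S *v (x + y)) = x \<bullet> (S *v x) + 2 * (x \<bullet> (S *v y)) + y \<bullet> (S *v y)"
  using assms[of y x] by (simp add: matrix_vector_right_distrib inner_add_left inner_add_right)

lemma transpose_diff: "transpose (A - B :: real^'n^'m) = transpose A - transpose B"
  by (simp add: transpose_def vec_eq_iff)



lemma limit_aux:
  fixes V :: "nat \<Rightarrow> real"
  assumes lam: "0 \<le> l" and a: "0 \<le> a" and h0: "0 \<le> h0"
    and up: "\<And>N. V N \<le> real N * l + h0"
    and low: "\<And>N m. 1 \<le> m \<Longrightarrow> m \<le> N \<Longrightarrow> real m * (real N - real m) * l - real m * b \<le> (real m + a) * V N"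
  shows "(\<lambda>N. V N / real N) \<longlonglongrightarrow> l"
proof (rule LIMSEQ_I)
  fix r :: real assume r: "0 < r"
  define m where "m = nat \<lceil>2*a*l/r\<rceil> + 1"
  have m1: "1 \<le> m" unfolding m_def by simp
  have mgt: "real m > 2*a*l/r" unfolding m_def by linarith
  hence "r * real m > 2*a*l" using r by (simp add: field_simps)
  hence mr: "a * l / real m < r/2" using m1 by (simp add: field_simps)
  define D where "D = real m * l + \<bar>b\<bar> + a * h0 + h0"
  have D0: "0 \<le> D" unfolding D_def using lam a h0 by simp
  define N0 where "N0 = max m (nat \<lceil>2 * D / r\<rceil> + 1)"
  show "\<exists>no. \<forall>N\<ge>no. norm (V N / real N - l) < r"
  proof (intro exI allI impI)
    fix N assume N: "N0 \<le> N"
    have mN: "m \<le> N" using N unfolding N0_def by simp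
    have "real N > 2 * D / r" using N unfolding N0_def by linarith
    hence ND: "2 * D < real N * r" using r by (simp add: field_simps)
    have Npos: "0 < real N" using mN m1 by simp
    have u1: "V N - real N * l \<le> h0" using up[of N] by simp
    have u2: "h0 \<le> D" unfolding D_def using lam a h0 by simp
    have lowN: "real m * (real N - real m) * l - real m * b \<le> (real m + a) * V N" using low[OF m1 mN] .
    have aV: "a * V N \<le> a * (real N * l + h0)" using up[of N] a by (rule mult_left_mono)
    have "real m * V N \<ge> real m * (real N - real m) * l - real m * b - a * (real N * l + h0)"
      using lowN aV by (simp add: algebra_simps)
    hence f1: "V N \<ge> real N * l - real m * l - b - (a * (real N * l + h0)) / real m"
      using m1 by (simp add: field_simps)
    have f2: "(a * (real N * l + h0)) / real m = real N * (a * l / real m) + a * h0 / real m"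
      by (simp add: field_simps add_divide_distrib)
    have f3: "a * h0 / real m \<le> a * h0" using frac_le[of "a*h0" "a*h0" 1 "real m"] m1 a h0 by simp
    have f4: "real N * (a * l / real m) \<le> real N * (r/2)" using mr Npos by (intro mult_left_mono) auto
    have l1: "V N - real N * l \<ge> - D - real N * (r/2)"
      unfolding D_def using f1 f2 f3 f4 abs_ge_self[of b] h0 by linarith
    have "\<bar>V N - real N * l\<bar> < real N * r" using u1 u2 l1 ND D0 by linarith
    hence "\<bar>(V N - real N * l) / real N\<bar> < r" using Npos by (simp add: field_simps)
    moreover have "(V N - real N * l) / real N = V N / real N - l" using Npos by (simp add: field_simps)
    ultimately show "norm (V N / real N - l) < r" by simp
  qed
qed

lemma limsup_aux:
  fixes S :: "nat \<Rightarrow> real"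
  assumes "\<And>N. S N \<le> real N * l + h0" and "0 \<le> l"
  shows "limsup (\<lambda>N. ereal (S N / real N)) \<le> ereal l"
proof -
  have ev: "\<forall>\<^sub>F N in sequentially. ereal (S N / real N) \<le> ereal (l + h0 / real N)"
  proof (rule eventually_sequentiallyI[of 1])
    fix N :: nat assume "1 \<le> N"
    hence "0 < real N" by simp
    hence "S N / real N \<le> l + h0 / real N" using assms(1)[of N] by (simp add: field_simps)
    thus "ereal (S N / real N) \<le> ereal (l + h0 / real N)" by simp
  qed
  have "(\<lambda>N. l + h0 / real N) \<longlonglongrightarrow> l + 0"
    by (intro tendsto_add tendsto_const lim_const_over_n)
  hence "(\<lambda>N. ereal (l + h0 / real N)) \<longlonglongrightarrow> ereal l" by (simp add: lim_ereal)
  hence "limsup (\<lambda>N. ereal (l + h0 / real N)) = ereal l"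
    by (intro lim_imp_Limsup) simp_all
  moreover have "limsup (\<lambda>N. ereal (S N / real N)) \<le> limsup (\<lambda>N. ereal (l + h0 / real N))"
    by (rule Limsup_mono[OF ev])
  ultimately show ?thesis by simp
qed

lemma lower_aux:
  fixes c :: "'x \<Rightarrow> 'u \<Rightarrow> real" and h :: "'x \<Rightarrow> real" and xs :: "nat \<Rightarrow> 'x" and us :: "nat \<Rightarrow> 'u"
  assumes BI: "\<And>t. h (xs t) + l \<le> c (xs t) (us t) + h (xs (Suc t))"
    and cnn: "\<And>x u. 0 \<le> c x u" and hnn: "\<And>x. 0 \<le> h x" and lam: "0 \<le> l" and a: "0 \<le> a"
    and hb: "\<And>x u. h x \<le> a * c x u + b"
    and m1: "1 \<le> m" and mN: "m \<le> N"
  shows "real m * (real N - real m) * l - real m * b \<le> (real m + a) * (\<Sum>t<N. c (xs t) (us t))"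
proof -
  let ?S = "\<lambda>k. \<Sum>t<k. c (xs t) (us t)"
  have tel: "real k * l + h (xs 0) - h (xs k) \<le> ?S k" for k
  proof (induction k)
    case 0 then show ?case by simp
  next
    case (Suc k) then show ?case using BI[of k] by (simp add: algebra_simps)
  qed
  have mono: "?S k \<le> ?S N" if "k \<le> N" for k
    by (rule sum_mono2) (use that cnn in auto)
  let ?W = "{N - m..<N}"
  have each: "real (N - m) * l - a * c (xs k) (us k) - b \<le> ?S N" if k: "k \<in> ?W" for k
  proof -
    have "k \<le> N" "N - m \<le> k" using k by auto
    hence "real (N - m) * l \<le> real k * l" using lam by (simp add: mult_right_mono)
    moreover have "real k * l - h (xs k) \<le> ?S k" using tel[of k] hnn[of "xs 0"] by linarith
    moreover have "h (xs k) \<le> a * c (xs k) (us k) + b" by (rule hb)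
    moreover have "?S k \<le> ?S N" using \<open>k \<le> N\<close> by (rule mono)
    ultimately show ?thesis by linarith
  qed
  have "(\<Sum>k\<in>?W. real (N - m) * l - a * c (xs k) (us k) - b) \<le> (\<Sum>k\<in>?W. ?S N)"
    by (rule sum_mono) (rule each)
  moreover have "card ?W = m" using mN by simp
  moreover have "(\<Sum>k\<in>?W. c (xs k) (us k)) \<le> ?S N"
    by (rule sum_mono2) (use cnn in auto)
  ultimately have "real m * (real (N - m) * l) - a * (\<Sum>k\<in>?W. c (xs k) (us k)) - real m * b \<le> real m * ?S N"
    by (simp add: sum_subtractf sum_distrib_left)
  moreover have "a * (\<Sum>k\<in>?W. c (xs k) (us k)) \<le> a * ?S N"
    using \<open>(\<Sum>k\<in>?W. c (xs k) (us k)) \<le> ?S N\<close> a by (rule mult_left_mono)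
  moreover have "real (N - m) = real N - real m" using mN by simp
  ultimately show ?thesis by (simp add: algebra_simps)
qed



lemma pd_lower: fixes Q :: "real^'n^'n" assumes "pos_def_mat Q"
  shows "\<exists>\<mu>>0. \<forall>y. \<mu> * (norm y)^2 \<le> y \<bullet> (Q *v y)"
proof -
  let ?S = "sphere (0::real^'n) 1"
  let ?f = "\<lambda>y. y \<bullet> (Q *v y)"
  obtain e :: "real^'n" where e: "norm e = 1" using vector_choose_size[of 1] by auto
  have ne: "?S \<noteq> {}" using e by auto
  have cont: "continuous_on ?S ?f"
    by (intro continuous_on_inner continuous_on_id linear_continuous_on matrix_vector_mul_bounded_linear)
  obtain x0 where x0: "x0 \<in> ?S" and mn: "\<forall>y\<in>?S. ?f x0 \<le> ?f y"
    using continuous_attains_inf[OF compact_sphere ne cont] by blast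
  have "x0 \<noteq> 0" using x0 by auto
  hence pos: "?f x0 > 0" using assms unfolding pos_def_mat_def by blast
  show ?thesis
  proof (intro exI[of _ "?f x0"] conjI allI pos)
    fix y :: "real^'n"
    show "?f x0 * (norm y)^2 \<le> ?f y"
    proof (cases "y = 0")
      case True thus ?thesis by simp
    next
      case False
      let ?y = "(1 / norm y) *\<^sub>R y"
      have "?y \<in> ?S" using False by simp
      hence "?f x0 \<le> ?f ?y" using mn by blast
      also have "?f ?y = (1 / norm y)^2 * ?f y"
        by (simp add: matrix_vector_mult_scaleR power2_eq_square)
      finally have "?f x0 \<le> (1 / norm y)^2 * ?f y" .
      hence "?f x0 * (norm y)^2 \<le> (1 / norm y)^2 * ?f y * (norm y)^2"
        by (simp add: mult_right_mono)
      also have "\<dots> = ?f y" using False by (simp add: field_simps)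
      finally show ?thesis .
    qed
  qed
qed

lemma quad_upper: fixes P :: "real^'n^'n"
  shows "\<exists>C\<ge>0. \<forall>y. y \<bullet> (P *v y) \<le> C * (norm y)^2"
proof -
  obtain K where K: "\<And>x. norm (P *v x) \<le> norm x * K"
    using bounded_linear.bounded[OF matrix_vector_mul_bounded_linear] by blast
  show ?thesis
  proof (intro exI[of _ "max K 0"] conjI allI)
    fix y :: "real^'n"
    have "y \<bullet> (P *v y) \<le> norm y * norm (P *v y)" by (rule norm_cauchy_schwarz)
    also have "\<dots> \<le> norm y * (norm y * max K 0)"
      using K[of y] order_trans[OF K[of y] mult_left_mono[OF max.cobounded1[of K 0] norm_ge_zero]] by (intro mult_left_mono) auto
    finally show "y \<bullet> (P *v y) \<le> max K 0 * (norm y)^2" by (simp add: power2_eq_square algebra_simps)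
  qed simp
qed


declare transpose_matrix_vector[simp del]

lemma algebra_main:
  fixes A :: "real^'n^'n" and B :: "real^'m^'n"
    and Q :: "real^'n^'n" and R :: "real^'m^'m" and \<theta> :: "real^'n"
    and P :: "real^'n^'n"
  assumes Q_pd: "pos_def_mat Q" and R_pd: "pos_def_mat R"
    and P_pd: "pos_def_mat P"
    and DARE: "P = Q + transpose A ** (P - P ** B ** matrix_inv (transpose B ** P ** B + R)
                      ** transpose B ** P) ** A"
  defines "W \<equiv> R + transpose B ** P ** B"
  shows "\<And>x u. 2 * stage_cost Q R \<theta> x u + 2 * h_e A B Q R P \<theta> (A *v x + B *v u)
           = 2 * h_e A B Q R P \<theta> x + 2 * lambda_e A B Q R P \<theta>
             + (u + matrix_inv W *v (transpose B *v (P *v (A *v x - beta_e A B Q R P \<theta>))))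
               \<bullet> (W *v (u + matrix_inv W *v (transpose B *v (P *v (A *v x - beta_e A B Q R P \<theta>)))))"
    and "\<And>x. K'_e B R P *v beta_e A B Q R P \<theta> - K_e A B R P *v x
           = - (matrix_inv W *v (transpose B *v (P *v (A *v x - beta_e A B Q R P \<theta>))))"
    and "\<And>v. 0 \<le> v \<bullet> (W *v v)"
proof -
  let ?Wi = "matrix_inv W"
  let ?M = "M_e B R P"
  let ?K = "K_e A B R P"
  let ?Pi = "matrix_inv P"
  let ?L = "A - B ** ?K"
  let ?N = "mat 1 - transpose ?L"
  let ?\<beta> = "beta_e A B Q R P \<theta>"
  let ?\<alpha> = "alpha_e A B Q R P \<theta>"
  let ?Bt = "transpose B"
  let ?At = "transpose A"
  have Psym: "\<And>a b. a \<bullet> (P *v b) = b \<bullet> (P *v a)" using P_pd by (rule pd_sym)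
  have Qsym: "\<And>a b. a \<bullet> (Q *v b) = b \<bullet> (Q *v a)" using Q_pd by (rule pd_sym)
  have Rsym: "\<And>a b. a \<bullet> (R *v b) = b \<bullet> (R *v a)" using R_pd by (rule pd_sym)
  have Wv: "\<And>v. W *v v = R *v v + ?Bt *v (P *v (B *v v))"
    by (simp add: W_def matrix_vector_mult_add_rdistrib matrix_vector_mul_assoc[symmetric])
  have Wq: "\<And>a b. a \<bullet> (W *v b) = a \<bullet> (R *v b) + (B *v a) \<bullet> (P *v (B *v b))"
    by (simp add: Wv inner_add_right inner_transpose)
  have Wsym: "\<And>a b. a \<bullet> (W *v b) = b \<bullet> (W *v a)"
    by (simp add: Wq Rsym Psym)
  show Wnn: "\<And>v. 0 \<le> v \<bullet> (W *v v)"
    using pd_nonneg[OF R_pd] pd_nonneg[OF P_pd] by (simp add: Wq add_nonneg_nonneg)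
  have Winj: "\<And>v. W *v v = 0 \<Longrightarrow> v = 0"
  proof -
    fix v assume "W *v v = 0"
    hence "v \<bullet> (R *v v) + (B *v v) \<bullet> (P *v (B *v v)) = 0" using Wq[of v v] by simp
    hence "v \<bullet> (R *v v) \<le> 0" using pd_nonneg[OF P_pd, of "B *v v"] by linarith
    thus "v = 0" using R_pd unfolding pos_def_mat_def by (meson not_less)
  qed
  have WWi: "\<And>v. W *v (?Wi *v v) = v" and WiW: "\<And>v. ?Wi *v (W *v v) = v"
    using inv_mat[OF Winj] by blast+
  have Wisym: "\<And>a b. a \<bullet> (?Wi *v b) = b \<bullet> (?Wi *v a)"
  proof -
    fix a b
    have "a \<bullet> (?Wi *v b) = (W *v (?Wi *v a)) \<bullet> (?Wi *v b)" by (simp add: WWi)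
    also have "\<dots> = (?Wi *v b) \<bullet> (W *v (?Wi *v a))" by (simp add: inner_commute)
    also have "\<dots> = (?Wi *v a) \<bullet> (W *v (?Wi *v b))" by (rule Wsym)
    also have "\<dots> = b \<bullet> (?Wi *v a)" by (simp add: WWi inner_commute)
    finally show "a \<bullet> (?Wi *v b) = b \<bullet> (?Wi *v a)" .
  qed
  have Mv: "\<And>y. ?M *v y = P *v y - P *v (B *v (?Wi *v (?Bt *v (P *v y))))"
    by (simp add: M_e_def W_def matrix_vector_mult_diff_rdistrib matrix_vector_mul_assoc[symmetric])
  have Mq: "\<And>y z. y \<bullet> (?M *v z) = y \<bullet> (P *v z) - (?Bt *v (P *v y)) \<bullet> (?Wi *v (?Bt *v (P *v z)))"
  proof -
    fix y z
    have "y \<bullet> (P *v (B *v (?Wi *v (?Bt *v (P *v z))))) = (?Bt *v (P *v y)) \<bullet> (?Wi *v (?Bt *v (P *v z)))"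
      by (metis Psym inner_commute inner_transpose)
    thus "y \<bullet> (?M *v z) = y \<bullet> (P *v z) - (?Bt *v (P *v y)) \<bullet> (?Wi *v (?Bt *v (P *v z)))"
      by (simp add: Mv inner_diff_right)
  qed
  have Msym: "\<And>a b. a \<bullet> (?M *v b) = b \<bullet> (?M *v a)"
    by (simp add: Mq Psym Wisym)
  have DARE': "P = Q + ?At ** ?M ** A"
    using DARE by (simp add: M_e_def add.commute)
  have DAREb: "\<And>x y. x \<bullet> (P *v y) = x \<bullet> (Q *v y) + (A *v x) \<bullet> (?M *v (A *v y))"
  proof -
    fix x y
    have "P *v y = Q *v y + ?At *v (?M *v (A *v y))"
      by (subst DARE') (simp add: matrix_vector_mult_add_rdistrib matrix_vector_mul_assoc[symmetric])
    thus "x \<bullet> (P *v y) = x \<bullet> (Q *v y) + (A *v x) \<bullet> (?M *v (A *v y))"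
      by (simp add: inner_add_right inner_transpose)
  qed
  have QC: "\<And>y u. (y + B *v u) \<bullet> (P *v (y + B *v u)) + u \<bullet> (R *v u)
      = y \<bullet> (?M *v y) + (u + ?Wi *v (?Bt *v (P *v y))) \<bullet> (W *v (u + ?Wi *v (?Bt *v (P *v y))))"
  proof -
    fix y u
    define g where "g = ?Bt *v (P *v y)"
    have e1: "(y + B *v u) \<bullet> (P *v (y + B *v u)) = y \<bullet> (P *v y) + 2 * (y \<bullet> (P *v (B *v u))) + (B *v u) \<bullet> (P *v (B *v u))"
      by (rule quad_add[OF Psym])
    have e2: "y \<bullet> (P *v (B *v u)) = g \<bullet> u"
    proof -
      have "y \<bullet> (P *v (B *v u)) = (P *v y) \<bullet> (B *v u)" using Psym[of y "B *v u"] by (simp add: inner_commute)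
      also have "\<dots> = g \<bullet> u" unfolding g_def by (rule inner_transpose)
      finally show ?thesis .
    qed
    have e3: "(u + ?Wi *v g) \<bullet> (W *v (u + ?Wi *v g)) = u \<bullet> (W *v u) + 2 * (u \<bullet> (W *v (?Wi *v g))) + (?Wi *v g) \<bullet> (W *v (?Wi *v g))"
      by (rule quad_add[OF Wsym])
    have e4: "u \<bullet> (W *v u) = u \<bullet> (R *v u) + (B *v u) \<bullet> (P *v (B *v u))" by (rule Wq)
    have e5: "y \<bullet> (?M *v y) = y \<bullet> (P *v y) - g \<bullet> (?Wi *v g)" unfolding g_def by (rule Mq)
    have e6: "(?Wi *v g) \<bullet> (W *v (?Wi *v g)) = g \<bullet> (?Wi *v g)" by (simp add: WWi inner_commute)
    have e7: "u \<bullet> (W *v (?Wi *v g)) = g \<bullet> u" by (simp add: WWi inner_commute)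
    show "(y + B *v u) \<bullet> (P *v (y + B *v u)) + u \<bullet> (R *v u)
      = y \<bullet> (?M *v y) + (u + ?Wi *v (?Bt *v (P *v y))) \<bullet> (W *v (u + ?Wi *v (?Bt *v (P *v y))))"
      unfolding g_def[symmetric] using e1 e2 e3 e4 e5 e6 e7 by linarith
  qed
  have Kv: "\<And>x. ?K *v x = ?Wi *v (?Bt *v (P *v (A *v x)))"
    by (simp add: K_e_def W_def matrix_vector_mul_assoc[symmetric])
  have K'v: "\<And>z. K'_e B R P *v z = ?Wi *v (?Bt *v (P *v z))"
    by (simp add: K'_e_def W_def matrix_vector_mul_assoc[symmetric])
  show "\<And>x. K'_e B R P *v ?\<beta> - ?K *v x = - (?Wi *v (?Bt *v (P *v (A *v x - ?\<beta>))))"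
    by (simp add: Kv K'v matrix_vector_mult_diff_distrib)
  have Lv: "\<And>x. ?L *v x = A *v x - B *v (?K *v x)"
    by (simp add: matrix_vector_mult_diff_rdistrib matrix_vector_mul_assoc[symmetric])
  have Linj: "\<And>x. (mat 1 - ?L) *v x = 0 \<Longrightarrow> x = 0"
  proof -
    fix x assume "(mat 1 - ?L) *v x = 0"
    hence Lx: "?L *v x = x" by (simp add: matrix_vector_mult_diff_rdistrib)
    have "(A *v x + B *v (- (?K *v x))) \<bullet> (P *v (A *v x + B *v (- (?K *v x)))) + (- (?K *v x)) \<bullet> (R *v (- (?K *v x)))
      = (A *v x) \<bullet> (?M *v (A *v x)) + (- (?K *v x) + ?Wi *v (?Bt *v (P *v (A *v x)))) \<bullet> (W *v (- (?K *v x) + ?Wi *v (?Bt *v (P *v (A *v x)))))"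
      by (rule QC)
    also have "- (?K *v x) + ?Wi *v (?Bt *v (P *v (A *v x))) = 0" by (simp add: Kv)
    also have "A *v x + B *v (- (?K *v x)) = x" using Lx Lv by (simp add: mv_neg)
    finally have "x \<bullet> (P *v x) + (?K *v x) \<bullet> (R *v (?K *v x)) = (A *v x) \<bullet> (?M *v (A *v x))"
      by (simp add: mv_neg)
    moreover have "x \<bullet> (P *v x) = x \<bullet> (Q *v x) + (A *v x) \<bullet> (?M *v (A *v x))" by (rule DAREb)
    ultimately have "x \<bullet> (Q *v x) \<le> 0" using pd_nonneg[OF R_pd, of "?K *v x"] by linarith
    thus "x = 0" using Q_pd unfolding pos_def_mat_def by (meson not_less)
  qed
  obtain C where C: "C ** (mat 1 - ?L) = mat 1" using Linj matrix_left_invertible_ker by blast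
  have "?N ** transpose C = mat 1"
    using arg_cong[OF C, of transpose] by (simp add: matrix_transpose_mul transpose_diff)
  hence Ninv: "invertible ?N" using invertible_right_inverse by blast
  have Na: "?N *v ?\<alpha> = Q *v \<theta>" unfolding alpha_e_def by (rule inv_mat2(1)[OF Ninv])
  have Pinj: "\<And>x. P *v x = 0 \<Longrightarrow> x = 0"
    using P_pd unfolding pos_def_mat_def by (metis inner_zero_right less_irrefl)
  have Pb: "P *v ?\<beta> = ?\<alpha>" unfolding beta_e_def by (rule inv_mat(1)[OF Pinj])
  have PPi: "\<And>v. P *v (?Pi *v v) = v" using inv_mat(1)[OF Pinj] by blast
  have KEY: "\<And>v. ?\<alpha> \<bullet> v - ?\<alpha> \<bullet> (?L *v v) = (Q *v \<theta>) \<bullet> v"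
  proof -
    fix v
    have "(?N *v ?\<alpha>) \<bullet> v = ?\<alpha> \<bullet> v - (transpose ?L *v ?\<alpha>) \<bullet> v"
      by (simp add: matrix_vector_mult_diff_rdistrib inner_diff_left)
    also have "(transpose ?L *v ?\<alpha>) \<bullet> v = ?\<alpha> \<bullet> (?L *v v)" by (rule inner_transpose[symmetric])
    finally show "?\<alpha> \<bullet> v - ?\<alpha> \<bullet> (?L *v v) = (Q *v \<theta>) \<bullet> v" using Na by simp
  qed
  have KEY2: "\<And>v. (P *v ?\<beta>) \<bullet> v = (Q *v \<theta>) \<bullet> v + ?\<beta> \<bullet> (?M *v (A *v v))"
  proof -
    fix v
    have a1: "?\<alpha> \<bullet> (B *v (?K *v v)) = (?Bt *v (P *v ?\<beta>)) \<bullet> (?Wi *v (?Bt *v (P *v (A *v v))))"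
      using inner_transpose[of ?\<alpha> B "?K *v v"] by (simp add: Kv Pb)
    have a2: "?\<beta> \<bullet> (P *v (A *v v)) = ?\<alpha> \<bullet> (A *v v)" using Psym[of ?\<beta> "A *v v"] Pb by (simp add: inner_commute)
    have "?\<alpha> \<bullet> (?L *v v) = ?\<beta> \<bullet> (?M *v (A *v v))"
      by (simp add: Lv inner_diff_right a1 a2 Mq)
    thus "(P *v ?\<beta>) \<bullet> v = (Q *v \<theta>) \<bullet> v + ?\<beta> \<bullet> (?M *v (A *v v))" using KEY[of v] Pb by simp
  qed
  let ?H = "H_e A B Q R P"
  let ?z = "A *v \<theta> - ?\<beta>"
  let ?d = "\<theta> - ?\<beta>"
  have Hdef: "?H = ?M - ?M ** A ** ?Pi ** ?At ** ?M"
    unfolding H_e_def DARE'[symmetric] by simp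
  have Hv: "\<And>z. ?H *v z = ?M *v z - ?M *v (A *v (?Pi *v (?At *v (?M *v z))))"
    by (simp add: Hdef matrix_vector_mult_diff_rdistrib matrix_vector_mul_assoc[symmetric])
  have wP: "?At *v (?M *v ?z) = P *v ?d"
  proof (rule vec_eq_by_inner)
    fix v
    have "(?At *v (?M *v ?z)) \<bullet> v = (?M *v ?z) \<bullet> (A *v v)" by (rule inner_transpose[symmetric])
    also have "\<dots> = ?z \<bullet> (?M *v (A *v v))" using Msym[of "A *v v" ?z] by (simp add: inner_commute)
    also have "\<dots> = (A *v \<theta>) \<bullet> (?M *v (A *v v)) - ?\<beta> \<bullet> (?M *v (A *v v))" by (simp add: inner_diff_left)
    also have "\<dots> = (\<theta> \<bullet> (P *v v) - \<theta> \<bullet> (Q *v v)) - ((P *v ?\<beta>) \<bullet> v - (Q *v \<theta>) \<bullet> v)"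
      using DAREb[of \<theta> v] KEY2[of v] by simp
    also have "\<dots> = (P *v ?d) \<bullet> v"
      using Psym[of \<theta> v] Qsym[of \<theta> v]
      by (simp add: matrix_vector_mult_diff_distrib inner_diff_left inner_diff_right inner_commute)
    finally show "(?At *v (?M *v ?z)) \<bullet> v = (P *v ?d) \<bullet> v" .
  qed
  have LAM: "?z \<bullet> (?H *v ?z) = \<theta> \<bullet> (Q *v \<theta>) + ?\<beta> \<bullet> (?M *v ?\<beta>) - ?\<beta> \<bullet> (P *v ?\<beta>)"
  proof -
    have h1: "?z \<bullet> (?H *v ?z) = ?z \<bullet> (?M *v ?z) - ?z \<bullet> (?M *v (A *v (?Pi *v (?At *v (?M *v ?z)))))"
      by (simp add: Hv inner_diff_right)
    have h2: "?z \<bullet> (?M *v (A *v (?Pi *v (?At *v (?M *v ?z))))) = (?At *v (?M *v ?z)) \<bullet> (?Pi *v (?At *v (?M *v ?z)))"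
    proof -
      have "?z \<bullet> (?M *v (A *v (?Pi *v (?At *v (?M *v ?z))))) = (A *v (?Pi *v (?At *v (?M *v ?z)))) \<bullet> (?M *v ?z)"
        by (rule Msym)
      also have "\<dots> = (?M *v ?z) \<bullet> (A *v (?Pi *v (?At *v (?M *v ?z))))" by (rule inner_commute)
      also have "\<dots> = (?At *v (?M *v ?z)) \<bullet> (?Pi *v (?At *v (?M *v ?z)))" by (rule inner_transpose)
      finally show ?thesis .
    qed
    have h3: "(?At *v (?M *v ?z)) \<bullet> (?Pi *v (?At *v (?M *v ?z))) = ?d \<bullet> (P *v ?d)"
      by (simp only: wP) (simp add: inner_commute PPi inv_mat(2)[OF Pinj])
    have h4: "?z \<bullet> (?M *v ?z) = (A *v \<theta>) \<bullet> (?M *v (A *v \<theta>)) - 2 * ((A *v \<theta>) \<bullet> (?M *v ?\<beta>)) + ?\<beta> \<bullet> (?M *v ?\<beta>)"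
      by (rule quad_diff[OF Msym])
    have h5: "(A *v \<theta>) \<bullet> (?M *v (A *v \<theta>)) = \<theta> \<bullet> (P *v \<theta>) - \<theta> \<bullet> (Q *v \<theta>)"
      using DAREb[of \<theta> \<theta>] by simp
    have h6: "(A *v \<theta>) \<bullet> (?M *v ?\<beta>) = (P *v ?\<beta>) \<bullet> \<theta> - (Q *v \<theta>) \<bullet> \<theta>"
      using KEY2[of \<theta>] Msym[of "A *v \<theta>" ?\<beta>] by simp
    have h7: "?d \<bullet> (P *v ?d) = \<theta> \<bullet> (P *v \<theta>) - 2 * (\<theta> \<bullet> (P *v ?\<beta>)) + ?\<beta> \<bullet> (P *v ?\<beta>)"
      by (rule quad_diff[OF Psym])
    have h8: "\<theta> \<bullet> (P *v ?\<beta>) = (P *v ?\<beta>) \<bullet> \<theta>" by (rule inner_commute)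
    have h9: "\<theta> \<bullet> (Q *v \<theta>) = (Q *v \<theta>) \<bullet> \<theta>" by (rule inner_commute)
    show ?thesis using h1 h2 h3 h4 h5 h6 h7 h8 h9 by linarith
  qed
  show "\<And>x u. 2 * stage_cost Q R \<theta> x u + 2 * h_e A B Q R P \<theta> (A *v x + B *v u)
           = 2 * h_e A B Q R P \<theta> x + 2 * lambda_e A B Q R P \<theta>
             + (u + ?Wi *v (?Bt *v (P *v (A *v x - ?\<beta>))))
               \<bullet> (W *v (u + ?Wi *v (?Bt *v (P *v (A *v x - ?\<beta>)))))"
  proof -
    fix x u
    let ?y = "A *v x - ?\<beta>"
    have s1: "2 * stage_cost Q R \<theta> x u = (x - \<theta>) \<bullet> (Q *v (x - \<theta>)) + u \<bullet> (R *v u)"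
      by (simp add: stage_cost_def)
    have s2: "2 * h_e A B Q R P \<theta> (A *v x + B *v u) = (?y + B *v u) \<bullet> (P *v (?y + B *v u))"
      by (simp add: h_e_def algebra_simps)
    have s3: "2 * h_e A B Q R P \<theta> x = (x - ?\<beta>) \<bullet> (P *v (x - ?\<beta>))"
      by (simp add: h_e_def)
    have s4: "2 * lambda_e A B Q R P \<theta> = ?z \<bullet> (?H *v ?z)"
      by (simp add: lambda_e_def)
    have q: "(?y + B *v u) \<bullet> (P *v (?y + B *v u)) + u \<bullet> (R *v u)
      = ?y \<bullet> (?M *v ?y) + (u + ?Wi *v (?Bt *v (P *v ?y))) \<bullet> (W *v (u + ?Wi *v (?Bt *v (P *v ?y))))"
      by (rule QC)
    have t1: "?y \<bullet> (?M *v ?y) = (A *v x) \<bullet> (?M *v (A *v x)) - 2 * ((A *v x) \<bullet> (?M *v ?\<beta>)) + ?\<beta> \<bullet> (?M *v ?\<beta>)"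
      by (rule quad_diff[OF Msym])
    have t2: "(A *v x) \<bullet> (?M *v (A *v x)) = x \<bullet> (P *v x) - x \<bullet> (Q *v x)"
      using DAREb[of x x] by simp
    have t3: "(A *v x) \<bullet> (?M *v ?\<beta>) = (P *v ?\<beta>) \<bullet> x - (Q *v \<theta>) \<bullet> x"
      using KEY2[of x] Msym[of "A *v x" ?\<beta>] by simp
    have t4: "(x - \<theta>) \<bullet> (Q *v (x - \<theta>)) = x \<bullet> (Q *v x) - 2 * (x \<bullet> (Q *v \<theta>)) + \<theta> \<bullet> (Q *v \<theta>)"
      by (rule quad_diff[OF Qsym])
    have t5: "(x - ?\<beta>) \<bullet> (P *v (x - ?\<beta>)) = x \<bullet> (P *v x) - 2 * (x \<bullet> (P *v ?\<beta>)) + ?\<beta> \<bullet> (P *v ?\<beta>)"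
      by (rule quad_diff[OF Psym])
    have t6: "x \<bullet> (P *v ?\<beta>) = (P *v ?\<beta>) \<bullet> x" by (rule inner_commute)
    have t7: "x \<bullet> (Q *v \<theta>) = (Q *v \<theta>) \<bullet> x" by (rule inner_commute)
    show "2 * stage_cost Q R \<theta> x u + 2 * h_e A B Q R P \<theta> (A *v x + B *v u)
           = 2 * h_e A B Q R P \<theta> x + 2 * lambda_e A B Q R P \<theta>
             + (u + ?Wi *v (?Bt *v (P *v ?y))) \<bullet> (W *v (u + ?Wi *v (?Bt *v (P *v ?y))))"
      using s1 s2 s3 s4 q t1 t2 t3 t4 t5 t6 t7 LAM by linarith
  qed
qed


theorem proposition1:
  fixes A :: "real^'n^'n" and B :: "real^'m^'n"
    and Q :: "real^'n^'n" and R :: "real^'m^'m" and \<theta> :: "real^'n"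
    and P :: "real^'n^'n"
  assumes ctrl: "controllable A B"
    and Q_pd: "pos_def_mat Q" and R_pd: "pos_def_mat R"
    and P_pd: "pos_def_mat P"
    and DARE: "P = Q + transpose A ** (P - P ** B ** matrix_inv (transpose B ** P ** B + R)
                      ** transpose B ** P) ** A"
  shows "(\<forall>x0. (\<lambda>N. opt_cost_N A B Q R \<theta> N x0 / real N) \<longlonglongrightarrow> lambda_e A B Q R P \<theta>)
    \<and> (\<forall>x. (\<exists>u. h_e A B Q R P \<theta> x + lambda_e A B Q R P \<theta>
                  = stage_cost Q R \<theta> x u + h_e A B Q R P \<theta> (A *v x + B *v u))
          \<and> (\<forall>u. h_e A B Q R P \<theta> x + lambda_e A B Q R P \<theta>
                  \<le> stage_cost Q R \<theta> x u + h_e A B Q R P \<theta> (A *v x + B *v u)))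
    \<and> (\<forall>x0. limsup (\<lambda>N. ereal ((\<Sum>t<N.
              stage_cost Q R \<theta> (cl_traj A B (K_e A B R P) (K'_e B R P *v beta_e A B Q R P \<theta>) x0 t)
                (K'_e B R P *v beta_e A B Q R P \<theta>
                   - K_e A B R P *v cl_traj A B (K_e A B R P) (K'_e B R P *v beta_e A B Q R P \<theta>) x0 t))
              / real N)) \<le> ereal (lambda_e A B Q R P \<theta>))"
proof -
  let ?h = "h_e A B Q R P \<theta>"
  let ?l = "lambda_e A B Q R P \<theta>"
  let ?c = "stage_cost Q R \<theta>"
  let ?K = "K_e A B R P"
  let ?\<beta> = "beta_e A B Q R P \<theta>"
  let ?k0 = "K'_e B R P *v ?\<beta>"
  define W where "W = R + transpose B ** P ** B"
  have AM1: "\<And>x u. 2 * stage_cost Q R \<theta> x u + 2 * ?h (A *v x + B *v u)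
           = 2 * ?h x + 2 * ?l
             + (u + matrix_inv W *v (transpose B *v (P *v (A *v x - ?\<beta>))))
               \<bullet> (W *v (u + matrix_inv W *v (transpose B *v (P *v (A *v x - ?\<beta>)))))"
    unfolding W_def by (rule algebra_main(1)[OF Q_pd R_pd P_pd DARE])
  have AM2: "\<And>x. ?k0 - ?K *v x = - (matrix_inv W *v (transpose B *v (P *v (A *v x - ?\<beta>))))"
    unfolding W_def by (rule algebra_main(2)[OF Q_pd R_pd P_pd DARE])
  have AM3: "\<And>v. 0 \<le> v \<bullet> (W *v v)"
    unfolding W_def by (rule algebra_main(3)[OF Q_pd R_pd P_pd DARE])
  have cnn: "\<And>x u. 0 \<le> ?c x u"
    unfolding stage_cost_def using pd_nonneg[OF Q_pd] pd_nonneg[OF R_pd] by simp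
  have hnn: "\<And>x. 0 \<le> ?h x"
    unfolding h_e_def using pd_nonneg[OF P_pd] by simp
  have BI: "\<And>x u. ?h x + ?l \<le> ?c x u + ?h (A *v x + B *v u)"
    using AM1 AM3 by (smt (verit))
  have BE: "\<And>x. ?h x + ?l = ?c x (?k0 - ?K *v x) + ?h (A *v x + B *v (?k0 - ?K *v x))"
  proof -
    fix x
    have "?k0 - ?K *v x + matrix_inv W *v (transpose B *v (P *v (A *v x - ?\<beta>))) = 0"
      using AM2[of x] by simp
    thus "?h x + ?l = ?c x (?k0 - ?K *v x) + ?h (A *v x + B *v (?k0 - ?K *v x))"
      using AM1[of x "?k0 - ?K *v x"] by simp
  qed
  have lam: "0 \<le> ?l"
  proof -
    have "?h ?\<beta> = 0" unfolding h_e_def by simp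
    thus ?thesis using BE[of ?\<beta>] cnn hnn by (smt (verit))
  qed
  have part2: "\<forall>x. (\<exists>u. ?h x + ?l = ?c x u + ?h (A *v x + B *v u))
          \<and> (\<forall>u. ?h x + ?l \<le> ?c x u + ?h (A *v x + B *v u))"
    using BE BI by blast
  let ?xs = "\<lambda>x0. cl_traj A B ?K ?k0 x0"
  have clsum: "(\<Sum>t<N. ?c (?xs x0 t) (?k0 - ?K *v ?xs x0 t)) = real N * ?l + ?h x0 - ?h (?xs x0 N)" for x0 N
  proof (induction N)
    case 0 then show ?case by simp
  next
    case (Suc N) then show ?case using BE[of "?xs x0 N"] by (simp add: algebra_simps)
  qed
  have clbound: "(\<Sum>t<N. ?c (?xs x0 t) (?k0 - ?K *v ?xs x0 t)) \<le> real N * ?l + ?h x0" for x0 N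
    using clsum[of x0 N] hnn[of "?xs x0 N"] by linarith
  have part3: "\<forall>x0. limsup (\<lambda>N. ereal ((\<Sum>t<N. ?c (?xs x0 t) (?k0 - ?K *v ?xs x0 t)) / real N)) \<le> ereal ?l"
    using limsup_aux[OF clbound lam] by blast
  obtain \<mu> where mu: "\<mu> > 0" "\<And>y. \<mu> * (norm y)^2 \<le> y \<bullet> (Q *v y)" using pd_lower[OF Q_pd] by blast
  obtain C where C: "C \<ge> 0" "\<And>y. y \<bullet> (P *v y) \<le> C * (norm y)^2" using quad_upper[of P] by blast
  define a where "a = 2 * C / \<mu>"
  define b where "b = C * (norm (\<theta> - ?\<beta>))^2"
  have a0: "0 \<le> a" unfolding a_def using C mu by simp
  have hb: "\<And>x u. ?h x \<le> a * ?c x u + b"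
  proof -
    fix x u
    let ?p = "norm (x - \<theta>)" and ?q = "norm (\<theta> - ?\<beta>)"
    have "norm (x - ?\<beta>) \<le> ?p + ?q" using norm_triangle_ineq[of "x - \<theta>" "\<theta> - ?\<beta>"] by simp
    hence "(norm (x - ?\<beta>))^2 \<le> (?p + ?q)^2" by (simp add: power_mono)
    also have "\<dots> \<le> 2 * ?p^2 + 2 * ?q^2" using zero_le_power2[of "?p - ?q"] unfolding power2_sum power2_diff by linarith
    finally have n1: "(norm (x - ?\<beta>))^2 \<le> 2 * ?p^2 + 2 * ?q^2" .
    have "?h x \<le> 1/2 * (C * (norm (x - ?\<beta>))^2)" unfolding h_e_def using C(2)[of "x - ?\<beta>"] by simp
    also have "\<dots> \<le> 1/2 * (C * (2 * ?p^2 + 2 * ?q^2))" using n1 C(1) by (intro mult_left_mono) auto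
    finally have h1: "?h x \<le> C * ?p^2 + b" unfolding b_def by (simp add: algebra_simps)
    have "1/2 * (\<mu> * ?p^2) \<le> ?c x u"
      unfolding stage_cost_def using mu(2)[of "x - \<theta>"] pd_nonneg[OF R_pd, of u] by simp
    hence "a * (1/2 * (\<mu> * ?p^2)) \<le> a * ?c x u" using a0 by (rule mult_left_mono)
    moreover have "a * (1/2 * (\<mu> * ?p^2)) = C * ?p^2" unfolding a_def using mu(1) by (simp add: field_simps)
    ultimately show "?h x \<le> a * ?c x u + b" using h1 by linarith
  qed
  have trajeq: "traj A B x0 (\<lambda>t. ?k0 - ?K *v ?xs x0 t) t = ?xs x0 t" for x0 t
    by (induction t) simp_all
  have part1: "(\<lambda>N. opt_cost_N A B Q R \<theta> N x0 / real N) \<longlonglongrightarrow> ?l" for x0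
  proof (rule limit_aux[OF lam a0 hnn[of x0], where b = b])
    fix N
    have bdd: "bdd_below (range (cost_N A B Q R \<theta> N x0))"
      unfolding cost_N_def by (rule bdd_belowI[of _ 0]) (auto intro: sum_nonneg cnn)
    have "opt_cost_N A B Q R \<theta> N x0 \<le> cost_N A B Q R \<theta> N x0 (\<lambda>t. ?k0 - ?K *v ?xs x0 t)"
      unfolding opt_cost_N_def by (rule cINF_lower[OF bdd]) simp
    also have "\<dots> \<le> real N * ?l + ?h x0" unfolding cost_N_def trajeq by (rule clbound)
    finally show "opt_cost_N A B Q R \<theta> N x0 \<le> real N * ?l + ?h x0" .
  next
    fix N m :: nat assume m1: "1 \<le> m" and mN: "m \<le> N"
    have ma: "0 < real m + a" using m1 a0 by simp
    have "(real m * (real N - real m) * ?l - real m * b) / (real m + a) \<le> cost_N A B Q R \<theta> N x0 u" for u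
    proof -
      have "real m * (real N - real m) * ?l - real m * b \<le> (real m + a) * cost_N A B Q R \<theta> N x0 u"
        unfolding cost_N_def
        by (rule lower_aux[where h = ?h, OF _ cnn hnn lam a0 hb m1 mN]) (simp add: BI)
      thus ?thesis using ma by (simp add: divide_le_eq mult.commute)
    qed
    hence "(real m * (real N - real m) * ?l - real m * b) / (real m + a) \<le> opt_cost_N A B Q R \<theta> N x0"
      unfolding opt_cost_N_def by (intro cINF_greatest) auto
    thus "real m * (real N - real m) * ?l - real m * b \<le> (real m + a) * opt_cost_N A B Q R \<theta> N x0"
      using ma by (simp add: divide_le_eq mult.commute)
  qed
  show ?thesis using part1 part2 part3 by blast
qed

end
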